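(* Let $n\ge 1$, let $\Omega\subseteq\mathbb R^n$ be open, and let $y:\Omega\to\mathbb R$ be a function of class $C^2$. Let $\mathbf Q$ be an arbitrary real $(n+2)\times(n+2)$ matrix, and suppose that for every $\mathbf x\in\Omega$, $$\mathbf v(\mathbf x)^\top\mathbf Q\,\mathbf v(\mathbf x)=0,\qquad\text{where }\mathbf v(\mathbf x)=\begin{bmatrix}\mathbf x\\ y(\mathbf x)\\ 1\end{bmatrix}\in\mathbb R^{n+2}.$$ Then, with $\mathbf H_y$ the Hessian matrix of $y$ and $\Delta_y$ the discriminant (defined below) of the left-hand side with respect to the variable $y$, the formula $$\det\!\big(\mp\mathbf H_y(\mathbf x)\big)\cdot\Delta_y(\mathbf x)^{n/2+1}=-\det\!\big(\mathbf Q+\mathbf Q^\top\big)$$ holds, where the sign $\mp$ depends on the selected branch of the square root function (i.e. on which root of the quadratic equation in $y$ the function $y$ is).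
   Context: The Hessian matrix $\mathbf H_y(\mathbf x)$ is the $n\times n$ matrix with entries $\partial^2 y/\partial x_i\partial x_j(\mathbf x)$. For fixed $\mathbf x$, the expression $\mathbf w^\top\mathbf Q\mathbf w$ with $\mathbf w=(\mathbf x, t, 1)^\top$ is a polynomial in the scalar variable $t$ of the form $\alpha t^2+\beta(\mathbf x)t+\gamma(\mathbf x)$, where $\alpha=Q_{n+1,n+1}$, $\beta(\mathbf x)=\sum_{i=1}^n (Q_{i,n+1}+Q_{n+1,i})x_i+Q_{n+1,n+2}+Q_{n+2,n+1}$ and $\gamma(\mathbf x)=\sum_{i,j=1}^n Q_{ij}x_ix_j+\sum_{i=1}^n(Q_{i,n+2}+Q_{n+2,i})x_i+Q_{n+2,n+2}$. The discriminant with respect to $y$ is $\Delta_y(\mathbf x)=\beta(\mathbf x)^2-4\alpha\gamma(\mathbf x)$ (a quadratic polynomial in $\mathbf x$). Here $\det$ denotes the determinant and $\Delta_y(\mathbf x)^{n/2+1}$ is the real power of the nonnegative number $\Delta_y(\mathbf x)$. The sign $\mp$ means $\det(-\mathbf H_y)$ or $\det(\mathbf H_y)$ according to the branch: writing (when $\alpha\neq0$) $y=\frac{-\beta\pm\sqrt{\Delta_y}}{2\alpha}$, the sign in the formula is opposite to the sign $\pm$ here; it only matters for odd $n$. *)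

theory Defs
  imports "HOL-Analysis.Analysis"
begin

text \<open>Index type for R^(n+2): the n coordinates of x, then the slot of y (T), then the constant slot (C).\<close>
datatype 'n ext_idx = X 'n | T | C

lemma UNIV_ext_idx: "(UNIV :: 'n ext_idx set) = range X \<union> {T, C}"
  by (auto intro: ext_idx.exhaust)

instance ext_idx :: (finite) finite
  by standard (simp add: UNIV_ext_idx)

definition partial_deriv :: "(real^'n \<Rightarrow> real) \<Rightarrow> 'n \<Rightarrow> real^'n \<Rightarrow> real" where
  "partial_deriv f i x = frechet_derivative f (at x) (axis i 1)"

definition hessian :: "(real^'n \<Rightarrow> real) \<Rightarrow> real^'n \<Rightarrow> real^'n^'n" where
  "hessian f x = (\<chi> i j. partial_deriv (partial_deriv f j) i x)"

definition C2_on :: "(real^'n) set \<Rightarrow> (real^'n \<Rightarrow> real) \<Rightarrow> bool" where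
  "C2_on S f \<longleftrightarrow>
     (\<forall>x\<in>S. f differentiable (at x)) \<and>
     (\<forall>j. \<forall>x\<in>S. partial_deriv f j differentiable (at x)) \<and>
     (\<forall>i j. continuous_on S (partial_deriv (partial_deriv f j) i))"

definition ext_vec :: "real^'n::finite \<Rightarrow> real \<Rightarrow> real^('n ext_idx)" where
  "ext_vec x t = (\<chi> k. case k of X i \<Rightarrow> x $ i | T \<Rightarrow> t | C \<Rightarrow> 1)"

text \<open>Coefficients of w^T Q w = alpha t^2 + beta(x) t + gamma(x).\<close>
definition qalpha :: "real^('n::finite ext_idx)^('n ext_idx) \<Rightarrow> real" where
  "qalpha Q = Q $ T $ T"

definition qbeta :: "real^('n::finite ext_idx)^('n ext_idx) \<Rightarrow> real^'n \<Rightarrow> real" where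
  "qbeta Q x = (\<Sum>i\<in>UNIV. (Q $ X i $ T + Q $ T $ X i) * x $ i) + Q $ T $ C + Q $ C $ T"

definition qgamma :: "real^('n::finite ext_idx)^('n ext_idx) \<Rightarrow> real^'n \<Rightarrow> real" where
  "qgamma Q x = (\<Sum>i\<in>UNIV. \<Sum>j\<in>UNIV. Q $ X i $ X j * x $ i * x $ j)
     + (\<Sum>i\<in>UNIV. (Q $ X i $ C + Q $ C $ X i) * x $ i) + Q $ C $ C"

definition qdiscr :: "real^('n::finite ext_idx)^('n ext_idx) \<Rightarrow> real^'n \<Rightarrow> real" where
  "qdiscr Q x = (qbeta Q x)^2 - 4 * qalpha Q * qgamma Q x"

end

theory Submission
  imports Defs
begin


lemma sum_ext_idx: "(\<Sum>k\<in>(UNIV::'n::finite ext_idx set). f k) = (\<Sum>i\<in>UNIV. f (X i)) + f T + f C"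
proof -
  have "(\<Sum>k\<in>(UNIV::'n ext_idx set). f k) = sum f (range X) + sum f {T, C}"
    unfolding UNIV_ext_idx by (rule sum.union_disjoint) auto
  also have "sum f (range X) = (\<Sum>i\<in>UNIV. f (X i))"
    by (subst sum.reindex) (auto simp: inj_def)
  finally show ?thesis by (simp add: add.assoc)
qed

lemma prod_ext_idx: "(\<Prod>k\<in>(UNIV::'n::finite ext_idx set). f k) = (\<Prod>i\<in>UNIV. f (X i)) * f T * f C"
proof -
  have "(\<Prod>k\<in>(UNIV::'n ext_idx set). f k) = prod f (range X) * prod f {T, C}"
    unfolding UNIV_ext_idx by (rule prod.union_disjoint) auto
  also have "prod f (range X) = (\<Prod>i\<in>UNIV. f (X i))"
    by (subst prod.reindex) (auto simp: inj_def)
  finally show ?thesis by (simp add: mult.assoc)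
qed

definition liftp :: "('n \<Rightarrow> 'n) \<Rightarrow> 'n ext_idx \<Rightarrow> 'n ext_idx" where
  "liftp q k = (case k of X i \<Rightarrow> X (q i) | T \<Rightarrow> T | C \<Rightarrow> C)"

lemma liftp_eq_map: "liftp q = map_permutation UNIV X q"
  unfolding map_permutation_def restrict_id_def liftp_def
  by (auto simp: fun_eq_iff inj_def split: ext_idx.split)

lemma sign_liftp: "q permutes (UNIV::'n::finite set) \<Longrightarrow> sign (liftp q) = sign q"
  unfolding liftp_eq_map by (rule sign_map_permutation) (auto simp: inj_def)

lemma liftp_permutes: "q permutes (UNIV::'n::finite set) \<Longrightarrow> liftp q permutes UNIV"
proof -
  assume q: "q permutes (UNIV::'n::finite set)"
  have "bij_betw X (UNIV::'n set) (range X)" by (auto simp: bij_betw_def inj_def)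
  then have "map_permutation UNIV X q permutes range X"
    by (rule map_permutation_permutes[OF _ q])
  then show ?thesis unfolding liftp_eq_map using permutes_subset by blast
qed

fun unX :: "'n ext_idx \<Rightarrow> 'n" where
  "unX (X i) = i" | "unX T = undefined" | "unX C = undefined"

lemma perm_fix_is_liftp:
  assumes p: "p permutes (UNIV::'n::finite ext_idx set)" and pT: "p T = T" and pC: "p C = C"
  shows "p \<in> liftp ` {q. q permutes (UNIV::'n set)}"
proof -
  define q where "q i = unX (p (X i))" for i
  have inj: "inj p" using p permutes_inj by blast
  have pX: "p (X i) = X (q i)" for i
  proof (cases "p (X i)")
    case T then show ?thesis using pT inj by (metis ext_idx.distinct(1) injD)
  next
    case C then show ?thesis using pC inj by (metis ext_idx.distinct(3) injD)
  qed (simp add: q_def)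
  have "p = liftp q" by (auto simp: fun_eq_iff liftp_def pX pT pC split: ext_idx.split)
  moreover have "q permutes UNIV"
    unfolding permutes_univ
  proof
    fix j
    obtain k where k: "p k = X j" using p by (metis permutes_univ)
    then obtain i where i: "k = X i" using pT pC by (cases k) auto
    show "\<exists>!i. q i = j"
    proof (rule ex1I[of _ i])
      show "q i = j" using k i pX by simp
      fix i' assume "q i' = j"
      then have "p (X i') = p (X i)" using pX k i by simp
      then show "i' = i" using inj by (auto dest: injD)
    qed
  qed
  ultimately show ?thesis by blast
qed

lemma det_ext_block:
  fixes A :: "real^('n::finite ext_idx)^('n ext_idx)"
  assumes rowC: "\<And>k. k \<noteq> C \<Longrightarrow> A$C$k = 0" and colT: "\<And>k. k \<noteq> T \<Longrightarrow> A$k$T = 0"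
  shows "det A = A$C$C * A$T$T * det (\<chi> i j. A$(X i)$(X j) :: real^'n^'n)"
proof -
  let ?f = "\<lambda>p. of_int (sign p) * (\<Prod>i\<in>UNIV. A $ i $ p i)"
  let ?P = "{p. p permutes (UNIV::'n ext_idx set)}"
  let ?PL = "liftp ` {q. q permutes (UNIV::'n set)}"
  have "det A = sum ?f ?P" by (simp add: det_def)
  also have "\<dots> = sum ?f ?PL"
  proof -
    have z: "\<forall>p\<in>?P - ?PL. ?f p = 0"
    proof
      fix p assume "p \<in> ?P - ?PL"
      then have p: "p permutes UNIV" and np: "p \<notin> ?PL" by auto
      have "\<exists>k\<in>UNIV. A $ k $ p k = 0"
      proof (cases "p C = C")
        case True
        then have "p T \<noteq> T" using perm_fix_is_liftp[OF p] np by blast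
        define k where "k = inv p T"
        have pk: "p k = T" unfolding k_def using p by (meson permutes_inverses(1))
        have "k \<noteq> T" using pk \<open>p T \<noteq> T\<close> by auto
        then show ?thesis using colT pk by (metis UNIV_I)
      next
        case False then show ?thesis using rowC by (metis UNIV_I)
      qed
      then show "?f p = 0" by (simp add: prod_zero)
    qed
    have fin: "finite ?P" by (simp add: finite_permutations)
    have sub: "?PL \<subseteq> ?P" using liftp_permutes by blast
    show ?thesis by (rule sum.mono_neutral_right[OF fin sub z])
  qed
  also have "\<dots> = (\<Sum>q\<in>{q. q permutes (UNIV::'n set)}. ?f (liftp q))"
  proof (rule sum.reindex[unfolded comp_def])
    show "inj_on liftp {q. q permutes (UNIV::'n set)}"
    proof (rule inj_onI)
      fix q q' :: "'n \<Rightarrow> 'n" assume "liftp q = liftp q'"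
      then have "liftp q (X i) = liftp q' (X i)" for i by simp
      then show "q = q'" by (auto simp: liftp_def fun_eq_iff)
    qed
  qed
  also have "\<dots> = (\<Sum>q\<in>{q. q permutes (UNIV::'n set)}. A$C$C * A$T$T *
       (of_int (sign q) * (\<Prod>i\<in>UNIV. A $ X i $ X (q i))))"
    by (rule sum.cong) (auto simp: sign_liftp prod_ext_idx liftp_def)
  also have "\<dots> = A$C$C * A$T$T * det (\<chi> i j. A$(X i)$(X j) :: real^'n^'n)"
    by (simp add: det_def sum_distrib_left)
  finally show ?thesis .
qed



lemma det_scale: "det (\<chi> i j. c * (A::real^'n::finite^'n)$i$j) = c ^ CARD('n) * det A"
  by (simp add: det_def prod.distrib sum_distrib_left mult.left_commute)

lemma inner_transpose_mv:
  fixes Q :: "real^'m::finite^'m"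
  shows "v \<bullet> (Q *v u) = u \<bullet> (transpose Q *v v)"
proof -
  have "v \<bullet> (Q *v u) = (\<Sum>i\<in>UNIV. \<Sum>j\<in>UNIV. v$i * Q$i$j * u$j)"
    by (simp add: inner_vec_def matrix_vector_mult_def sum_distrib_left mult.assoc)
  also have "\<dots> = (\<Sum>j\<in>UNIV. \<Sum>i\<in>UNIV. v$i * Q$i$j * u$j)" by (rule sum.swap)
  also have "\<dots> = u \<bullet> (transpose Q *v v)"
    by (simp add: inner_vec_def matrix_vector_mult_def transpose_def sum_distrib_left mult.commute mult.left_commute)
  finally show ?thesis .
qed



lemma tmm_entry:
  fixes S :: "real^'m::finite^'m"
  shows "(transpose (\<chi> r c. u c $ r) ** S ** (\<chi> r c. v c $ r)) $ a $ b = u a \<bullet> (S *v v b)"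
proof -
  have "(transpose (\<chi> r c. u c $ r) ** S ** (\<chi> r c. v c $ r)) $ a $ b
      = (\<Sum>l\<in>UNIV. (\<Sum>k\<in>UNIV. u a $ k * S$k$l) * v b $ l)"
    by (simp add: matrix_matrix_mult_def transpose_def)
  also have "\<dots> = (\<Sum>l\<in>UNIV. \<Sum>k\<in>UNIV. u a $ k * S$k$l * v b $ l)"
    by (simp add: sum_distrib_right)
  also have "\<dots> = (\<Sum>k\<in>UNIV. \<Sum>l\<in>UNIV. u a $ k * S$k$l * v b $ l)" by (rule sum.swap)
  also have "\<dots> = u a \<bullet> (S *v v b)"
    by (simp add: inner_vec_def matrix_vector_mult_def sum_distrib_left mult.assoc)
  finally show ?thesis .
qed

lemma inner_sym_S:
  fixes Q :: "real^'m::finite^'m"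
  shows "v \<bullet> ((Q + transpose Q) *v u) = u \<bullet> ((Q + transpose Q) *v v)"
  by (simp add: matrix_vector_mult_add_rdistrib inner_add_right inner_transpose_mv)

lemma FT_expand:
  fixes Q :: "real^('n::finite ext_idx)^('n ext_idx)"
  shows "((Q + transpose Q) *v ext_vec x t) $ T = 2 * qalpha Q * t + qbeta Q x"
proof -
  have "((Q + transpose Q) *v ext_vec x t) $ T = (\<Sum>k\<in>UNIV. (Q$T$k + Q$k$T) * ext_vec x t $ k)"
    by (simp add: matrix_vector_mult_def transpose_def)
  also have "\<dots> = (\<Sum>i\<in>UNIV. (Q$T$X i + Q$X i$T) * x $ i) + (Q$T$T + Q$T$T) * t + (Q$T$C + Q$C$T)"
    by (simp add: sum_ext_idx ext_vec_def)
  also have "\<dots> = 2 * qalpha Q * t + qbeta Q x"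
    by (simp add: qalpha_def qbeta_def add.commute)
  finally show ?thesis .
qed

lemma powr_sq: "(s::real) \<ge> 0 \<Longrightarrow> (s^2) powr (real n / 2 + 1) = s ^ (n + 2)"
proof (cases "s = 0")
  case False
  assume "s \<ge> 0"
  then have "s > 0" using False by simp
  have "(s^2) powr (real n / 2 + 1) = (s powr 2) powr (real n / 2 + 1)"
    using \<open>s > 0\<close> by (simp add: powr_realpow)
  also have "\<dots> = s powr (real (n + 2))" by (simp add: powr_powr algebra_simps)
  also have "\<dots> = s ^ (n+2)" by (rule powr_realpow[OF \<open>s > 0\<close>])
  finally show ?thesis .
qed simp


lemma quad_expand:
  fixes Q :: "real^('n::finite ext_idx)^('n ext_idx)"
  shows "ext_vec x t \<bullet> (Q *v ext_vec x t) = qalpha Q * t^2 + qbeta Q x * t + qgamma Q x"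
proof -
  have e: "ext_vec x t $ X i = x $ i" "ext_vec x t $ T = t" "ext_vec x t $ C = 1" for i
    by (simp_all add: ext_vec_def)
  have "ext_vec x t \<bullet> (Q *v ext_vec x t) = (\<Sum>r\<in>UNIV. \<Sum>c\<in>UNIV. ext_vec x t $ r * Q $ r $ c * ext_vec x t $ c)"
    by (simp add: inner_vec_def matrix_vector_mult_def sum_distrib_left mult.assoc)
  also have "\<dots> = (\<Sum>i\<in>UNIV. \<Sum>j\<in>UNIV. x$i * Q$X i$X j * x$j) + (\<Sum>i\<in>UNIV. x$i * Q$X i$T * t) + (\<Sum>i\<in>UNIV. x$i * Q$X i$C)
     + ((\<Sum>j\<in>UNIV. t * Q$T$X j * x$j) + t * Q$T$T*t + t*Q$T$C)
     + ((\<Sum>j\<in>UNIV. Q$C$X j * x$j) + Q$C$T*t + Q$C$C)"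
    by (simp only: sum_ext_idx e sum.distrib) simp
  also have "\<dots> = qalpha Q * t^2 + qbeta Q x * t + qgamma Q x"
  proof -
    have 1: "(\<Sum>i\<in>UNIV. x$i * Q$X i$T * t) + (\<Sum>j\<in>UNIV. t * Q$T$X j * x$j) = t * (\<Sum>i\<in>UNIV. (Q $ X i $ T + Q $ T $ X i) * x $ i)"
      by (simp add: sum_distrib_left sum.distrib[symmetric] algebra_simps)
    have 2: "(\<Sum>i\<in>UNIV. x$i * Q$X i$C) + (\<Sum>j\<in>UNIV. Q$C$X j * x$j) = (\<Sum>i\<in>UNIV. (Q $ X i $ C + Q $ C $ X i) * x $ i)"
      by (simp add: sum.distrib[symmetric] algebra_simps)
    have 3: "(\<Sum>i\<in>UNIV. \<Sum>j\<in>UNIV. x$i * Q$X i$X j * x$j) = (\<Sum>i\<in>UNIV. \<Sum>j\<in>UNIV. Q $ X i $ X j * x $ i * x $ j)"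
      by (simp add: algebra_simps)
    show ?thesis unfolding qalpha_def qbeta_def qgamma_def using 1 2 3
      by (simp add: power2_eq_square algebra_simps)
  qed
  finally show ?thesis .
qed


definition embX :: "real^'n::finite \<Rightarrow> real^('n ext_idx)" where
  "embX h = (\<chi> k. case k of X i \<Rightarrow> h $ i | T \<Rightarrow> 0 | C \<Rightarrow> 0)"

definition eT :: "real^('n::finite ext_idx)" where
  "eT = (\<chi> k. if k = T then 1 else 0)"

definition eC :: "real^('n::finite ext_idx)" where
  "eC = (\<chi> k. if k = C then 1 else 0)"

lemma embX_linear: "bounded_linear (embX :: real^'n::finite \<Rightarrow> _)"
proof -
  have "linear (embX :: real^'n::finite \<Rightarrow> _)"
    by (rule linearI) (auto simp: embX_def vec_eq_iff split: ext_idx.split)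
  then show ?thesis by (simp add: linear_conv_bounded_linear)
qed

lemma ext_vec_split: "ext_vec x t = embX x + t *\<^sub>R eT + eC"
  by (auto simp: ext_vec_def embX_def eT_def eC_def vec_eq_iff split: ext_idx.split)

lemma inner_eT: "eT \<bullet> v = v $ T"
  by (simp add: eT_def inner_vec_def if_distrib[of "\<lambda>a. a * _"] cong: if_cong)

lemma g_deriv:
  assumes "y differentiable (at z)"
  shows "((\<lambda>w. ext_vec w (y w)) has_derivative (\<lambda>h. embX h + frechet_derivative y (at z) h *\<^sub>R eT)) (at z)"
proof -
  have dy: "(y has_derivative frechet_derivative y (at z)) (at z)"
    using assms frechet_derivative_works by blast
  have "((\<lambda>w. embX w + y w *\<^sub>R eT + eC) has_derivative (\<lambda>h. embX h + frechet_derivative y (at z) h *\<^sub>R eT)) (at z)"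
    by (auto intro!: derivative_eq_intros bounded_linear.has_derivative[OF embX_linear] dy)
  then show ?thesis unfolding ext_vec_split .
qed

lemma zero_deriv:
  assumes "open S" "z \<in> S" "\<forall>w\<in>S. f w = 0" "(f has_derivative D) (at z)"
  shows "D h = 0"
proof -
  have "((\<lambda>w. 0) has_derivative D) (at z)"
    by (rule has_derivative_transform_within_open[OF assms(4,1,2)]) (use assms(3) in auto)
  then have "D = (\<lambda>h. 0)" using has_derivative_const has_derivative_unique by blast
  then show ?thesis by simp
qed

lemma partial_eq: "partial_deriv f j z = frechet_derivative f (at z) (axis j 1)"
  by (simp add: partial_deriv_def)



lemma D1:
  fixes Q :: "real^('n::finite ext_idx)^('n ext_idx)"
  assumes "open \<Omega>" "C2_on \<Omega> y" "\<forall>x\<in>\<Omega>. ext_vec x (y x) \<bullet> (Q *v ext_vec x (y x)) = 0" "z \<in> \<Omega>"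
  shows "(embX (axis j 1) + partial_deriv y j z *\<^sub>R eT) \<bullet> ((Q + transpose Q) *v ext_vec z (y z)) = 0"
proof -
  let ?g = "\<lambda>w. ext_vec w (y w)"
  let ?Dg = "\<lambda>h. embX h + frechet_derivative y (at z) h *\<^sub>R eT"
  have dg: "(?g has_derivative ?Dg) (at z)"
    using g_deriv assms(2,4) unfolding C2_on_def by blast
  have "((\<lambda>w. ?g w \<bullet> (Q *v ?g w)) has_derivative (\<lambda>h. ?g z \<bullet> (Q *v ?Dg h) + ?Dg h \<bullet> (Q *v ?g z))) (at z)"
    by (rule has_derivative_inner[OF dg bounded_linear.has_derivative[OF matrix_vector_mul_bounded_linear dg]])
  then have "?g z \<bullet> (Q *v ?Dg (axis j 1)) + ?Dg (axis j 1) \<bullet> (Q *v ?g z) = 0"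
    by (rule zero_deriv[OF assms(1,4) assms(3)])
  then have "?Dg (axis j 1) \<bullet> (transpose Q *v ?g z) + ?Dg (axis j 1) \<bullet> (Q *v ?g z) = 0"
    by (simp only: inner_transpose_mv[of "?g z"])
  then show ?thesis
    by (simp add: partial_eq matrix_vector_mult_add_rdistrib inner_add_right)
qed

lemma D2:
  fixes Q :: "real^('n::finite ext_idx)^('n ext_idx)"
  assumes "open \<Omega>" "C2_on \<Omega> y" "\<forall>x\<in>\<Omega>. ext_vec x (y x) \<bullet> (Q *v ext_vec x (y x)) = 0" "x \<in> \<Omega>"
  shows "(embX (axis j 1) + partial_deriv y j x *\<^sub>R eT) \<bullet> ((Q + transpose Q) *v (embX (axis i 1) + partial_deriv y i x *\<^sub>R eT))
      + hessian y x $ i $ j * ((Q + transpose Q) *v ext_vec x (y x)) $ T = 0"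
proof -
  let ?S = "Q + transpose Q"
  let ?g = "\<lambda>w. ext_vec w (y w)"
  let ?Dg = "\<lambda>h. embX h + frechet_derivative y (at x) h *\<^sub>R eT"
  let ?P = "\<lambda>w. embX (axis j 1) + partial_deriv y j w *\<^sub>R eT"
  let ?Dj = "frechet_derivative (partial_deriv y j) (at x)"
  have dg: "(?g has_derivative ?Dg) (at x)"
    using g_deriv assms(2,4) unfolding C2_on_def by blast
  have dj: "(partial_deriv y j has_derivative ?Dj) (at x)"
    using assms(2,4) frechet_derivative_works unfolding C2_on_def by blast
  have dP: "(?P has_derivative (\<lambda>h. ?Dj h *\<^sub>R eT)) (at x)"
    by (auto intro!: derivative_eq_intros dj)
  have "((\<lambda>w. ?P w \<bullet> (?S *v ?g w)) has_derivative (\<lambda>h. ?P x \<bullet> (?S *v ?Dg h) + (?Dj h *\<^sub>R eT) \<bullet> (?S *v ?g x))) (at x)"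
    by (rule has_derivative_inner[OF dP bounded_linear.has_derivative[OF matrix_vector_mul_bounded_linear dg]])
  note dpsi = this
  have z: "\<forall>w\<in>\<Omega>. ?P w \<bullet> (?S *v ?g w) = 0"
    using D1[OF assms(1,2,3)] by blast
  have "?P x \<bullet> (?S *v ?Dg (axis i 1)) + (?Dj (axis i 1) *\<^sub>R eT) \<bullet> (?S *v ?g x) = 0"
    by (rule zero_deriv[OF assms(1,4) z dpsi])
  then show ?thesis
    by (simp add: partial_eq hessian_def inner_eT)
qed



lemma key:
  fixes Q :: "real^('n::finite ext_idx)^('n ext_idx)"
  assumes "open \<Omega>" "C2_on \<Omega> y" "\<forall>x\<in>\<Omega>. ext_vec x (y x) \<bullet> (Q *v ext_vec x (y x)) = 0" "x \<in> \<Omega>"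
  defines "Ft \<equiv> ((Q + transpose Q) *v ext_vec x (y x)) $ T"
  shows "- det (Q + transpose Q) = Ft^2 * (-Ft) ^ CARD('n) * det (hessian y x)"
proof -
  let ?S = "Q + transpose Q"
  let ?g = "ext_vec x (y x)"
  define Pv where "Pv i = embX (axis i 1) + partial_deriv y i x *\<^sub>R eT" for i
  define colL where "colL k = (case k of X i \<Rightarrow> Pv i | T \<Rightarrow> eT | C \<Rightarrow> ?g)" for k
  define colR where "colR k = (case k of X i \<Rightarrow> Pv i | T \<Rightarrow> ?g | C \<Rightarrow> eT)" for k
  define M :: "real^('n ext_idx)^('n ext_idx)" where "M = (\<chi> r c. colL c $ r)"
  define M' :: "real^('n ext_idx)^('n ext_idx)" where "M' = (\<chi> r c. colR c $ r)"
  define N where "N = transpose M ** ?S ** M'"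
  have d1: "Pv i \<bullet> (?S *v ?g) = 0" for i
    unfolding Pv_def by (rule D1[OF assms(1-4)])
  have d2: "Pv j \<bullet> (?S *v Pv i) + hessian y x $ i $ j * Ft = 0" for i j
    unfolding Pv_def Ft_def by (rule D2[OF assms(1-4)])
  have gg: "?g \<bullet> (?S *v ?g) = 0"
  proof -
    have "?g \<bullet> (?S *v ?g) = ?g \<bullet> (Q *v ?g) + ?g \<bullet> (transpose Q *v ?g)"
      by (simp add: matrix_vector_mult_add_rdistrib inner_add_right)
    also have "?g \<bullet> (transpose Q *v ?g) = ?g \<bullet> (Q *v ?g)"
      using inner_transpose_mv[of ?g Q ?g] by simp
    finally show ?thesis using assms(3,4) by simp
  qed
  have eTg: "eT \<bullet> (?S *v ?g) = Ft" unfolding Ft_def by (simp add: inner_eT)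
  have geT: "?g \<bullet> (?S *v eT) = Ft" using inner_sym_S[of ?g Q eT] eTg by simp
  have gP: "?g \<bullet> (?S *v Pv i) = 0" for i using inner_sym_S[of ?g Q "Pv i"] d1[of i] by simp
  have PvC: "Pv i $ C = 0" for i by (simp add: Pv_def embX_def eT_def)
  have PvX: "Pv j $ X i = (if i = j then 1 else 0)" for i j by (simp add: Pv_def embX_def eT_def axis_def)
  have eTX: "eT $ k = (if k = T then 1 else 0)" for k by (simp add: eT_def)
  have gC: "?g $ C = 1" by (simp add: ext_vec_def)
  have detM: "det M = 1"
  proof -
    have "det M = M$C$C * M$T$T * det (\<chi> i j. M$(X i)$(X j) :: real^'n^'n)"
    proof (rule det_ext_block)
      show "M $ C $ k = 0" if "k \<noteq> C" for k
        using that by (cases k) (auto simp: M_def colL_def PvC eTX)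
      show "M $ k $ T = 0" if "k \<noteq> T" for k
        using that by (simp add: M_def colL_def eTX)
    qed
    also have "(\<chi> i j. M$(X i)$(X j) :: real^'n^'n) = mat 1"
      by (simp add: M_def colL_def PvX vec_eq_iff mat_def)
    finally show ?thesis by (simp add: M_def colL_def gC eTX)
  qed
  have detM': "det M' = - 1"
  proof -
    have "M' = (\<chi> r c. M $ r $ Transposition.transpose T C c)"
      by (auto simp: M_def M'_def colL_def colR_def vec_eq_iff Transposition.transpose_def split: ext_idx.split)
    then have "det M' = of_int (sign (Transposition.transpose T (C::'n ext_idx))) * det M"
      using det_permute_columns[OF permutes_swap_id[of T UNIV C]] by simp
    then show ?thesis using detM by (simp add: sign_swap_id)
  qed
  have Nent: "N $ a $ b = colL a \<bullet> (?S *v colR b)" for a b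
    unfolding N_def M_def M'_def by (rule tmm_entry)
  have detN: "det N = Ft * Ft * det (\<chi> i j. (- Ft) * transpose (hessian y x) $ i $ j :: real^'n^'n)"
  proof -
    have "det N = N$C$C * N$T$T * det (\<chi> i j. N$(X i)$(X j) :: real^'n^'n)"
    proof (rule det_ext_block)
      show "N $ C $ k = 0" if "k \<noteq> C" for k
        using that by (cases k) (auto simp: Nent colL_def colR_def gg gP)
      show "N $ k $ T = 0" if "k \<noteq> T" for k
        using that by (cases k) (auto simp: Nent colL_def colR_def gg d1)
    qed
    also have "(\<chi> i j. N$(X i)$(X j) :: real^'n^'n) = (\<chi> i j. (- Ft) * transpose (hessian y x) $ i $ j)"
    proof -
      have "Pv i \<bullet> (?S *v Pv j) = (- Ft) * hessian y x $ j $ i" for i j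
        using d2[where i=j and j=i] by (simp add: algebra_simps)
      then show ?thesis by (simp add: Nent colL_def colR_def vec_eq_iff transpose_def)
    qed
    finally show ?thesis by (simp add: Nent colL_def colR_def geT eTg)
  qed
  have "det N = det M * det ?S * det M'"
    unfolding N_def by (simp add: det_mul)
  then have "- det ?S = det N" using detM detM' by simp
  also have "\<dots> = Ft^2 * (-Ft) ^ CARD('n) * det (hessian y x)"
    unfolding detN det_scale by (simp add: power2_eq_square)
  finally show ?thesis .
qed



theorem theorem1:
  fixes \<Omega> :: "(real^'n) set" and y :: "real^'n \<Rightarrow> real"
    and Q :: "real^('n ext_idx)^('n ext_idx)"
  assumes "open \<Omega>"
    and "C2_on \<Omega> y"
    and "\<forall>x\<in>\<Omega>. ext_vec x (y x) \<bullet> (Q *v ext_vec x (y x)) = 0"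
  shows "\<forall>x\<in>\<Omega>.
     (qalpha Q \<noteq> 0 \<longrightarrow>
        (y x = (- qbeta Q x + sqrt (qdiscr Q x)) / (2 * qalpha Q) \<longrightarrow>
           det (- hessian y x) * qdiscr Q x powr (real CARD('n) / 2 + 1) = - det (Q + transpose Q)) \<and>
        (y x = (- qbeta Q x - sqrt (qdiscr Q x)) / (2 * qalpha Q) \<longrightarrow>
           det (hessian y x) * qdiscr Q x powr (real CARD('n) / 2 + 1) = - det (Q + transpose Q))) \<and>
     (qalpha Q = 0 \<longrightarrow>
        (qbeta Q x \<ge> 0 \<longrightarrow>
           det (- hessian y x) * qdiscr Q x powr (real CARD('n) / 2 + 1) = - det (Q + transpose Q)) \<and>
        (qbeta Q x \<le> 0 \<longrightarrow>
           det (hessian y x) * qdiscr Q x powr (real CARD('n) / 2 + 1) = - det (Q + transpose Q)))"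
proof
  fix x assume x: "x \<in> \<Omega>"
  define Ft where "Ft = ((Q + transpose Q) *v ext_vec x (y x)) $ T"
  let ?H = "hessian y x"
  let ?n = "CARD('n)"
  let ?D = "qdiscr Q x"
  let ?a = "qalpha Q" let ?b = "qbeta Q x" let ?c = "qgamma Q x"
  have k: "- det (Q + transpose Q) = Ft^2 * (-Ft) ^ ?n * det ?H"
    unfolding Ft_def by (rule key[OF assms x])
  have Fte: "Ft = 2 * ?a * y x + ?b" unfolding Ft_def by (rule FT_expand)
  have quad: "?a * (y x)^2 + ?b * y x + ?c = 0"
    using assms(3) x quad_expand[of x "y x" Q] by simp
  have D: "?D = Ft^2"
  proof -
    have "Ft^2 = 4 * ?a * (?a * (y x)^2 + ?b * y x) + ?b^2"
      unfolding Fte by (simp add: power2_eq_square algebra_simps)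
    also have "\<dots> = ?D"
    proof -
      have c: "?c = - (?a * (y x)^2 + ?b * y x)" using quad by linarith
      show ?thesis unfolding qdiscr_def c by (simp add: algebra_simps)
    qed
    finally show ?thesis by simp
  qed
  have detmH: "det (- ?H) = (-1) ^ ?n * det ?H"
  proof -
    have "- ?H = (\<chi> i j. (-1) * ?H $ i $ j)" by (simp add: vec_eq_iff)
    then show ?thesis using det_scale[of "-1" ?H] by (simp only:)
  qed
  have pos: "det (- ?H) * ?D powr (real ?n / 2 + 1) = - det (Q + transpose Q)" if "Ft \<ge> 0"
  proof -
    have "?D powr (real ?n / 2 + 1) = Ft ^ (?n + 2)" unfolding D by (rule powr_sq[OF that])
    then show ?thesis unfolding k detmH by (simp add: power_minus[of Ft] power_add power2_eq_square algebra_simps)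
  qed
  have neg: "det ?H * ?D powr (real ?n / 2 + 1) = - det (Q + transpose Q)" if "Ft \<le> 0"
  proof -
    have "?D = (-Ft)^2" using D by simp
    then have "?D powr (real ?n / 2 + 1) = (-Ft) ^ (?n + 2)" using powr_sq[of "-Ft" ?n] that by simp
    then show ?thesis unfolding k by (simp add: power_add power2_eq_square algebra_simps)
  qed
  have sq: "sqrt ?D \<ge> 0" using D by simp
  show "(?a \<noteq> 0 \<longrightarrow>
        (y x = (- ?b + sqrt ?D) / (2 * ?a) \<longrightarrow>
           det (- ?H) * ?D powr (real ?n / 2 + 1) = - det (Q + transpose Q)) \<and>
        (y x = (- ?b - sqrt ?D) / (2 * ?a) \<longrightarrow>
           det ?H * ?D powr (real ?n / 2 + 1) = - det (Q + transpose Q))) \<and>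
     (?a = 0 \<longrightarrow>
        (?b \<ge> 0 \<longrightarrow>
           det (- ?H) * ?D powr (real ?n / 2 + 1) = - det (Q + transpose Q)) \<and>
        (?b \<le> 0 \<longrightarrow>
           det ?H * ?D powr (real ?n / 2 + 1) = - det (Q + transpose Q)))"
  proof (intro conjI impI)
    assume a: "?a \<noteq> 0" and yx: "y x = (- ?b + sqrt ?D) / (2 * ?a)"
    have "Ft = sqrt ?D" unfolding Fte yx using a by (simp add: field_simps)
    then show "det (- ?H) * ?D powr (real ?n / 2 + 1) = - det (Q + transpose Q)" using pos sq by simp
  next
    assume a: "?a \<noteq> 0" and yx: "y x = (- ?b - sqrt ?D) / (2 * ?a)"
    have "Ft = - sqrt ?D" unfolding Fte yx using a by (simp add: field_simps)
    then show "det ?H * ?D powr (real ?n / 2 + 1) = - det (Q + transpose Q)" using neg sq by simp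
  next
    assume a: "?a = 0" and b: "?b \<ge> 0"
    have "Ft = ?b" using Fte a by simp
    then show "det (- ?H) * ?D powr (real ?n / 2 + 1) = - det (Q + transpose Q)" using pos b by simp
  next
    assume a: "?a = 0" and b: "?b \<le> 0"
    have "Ft = ?b" using Fte a by simp
    then show "det ?H * ?D powr (real ?n / 2 + 1) = - det (Q + transpose Q)" using neg b by simp
  qed
qed


end
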